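(* Let $s\in\mathbb R$, $0\le b<\tfrac12$, and let $\varphi\in\bigcap_{\beta<1/2}H^\beta(\mathbb R)$ be a function of $t$ only. Then there is a constant $C=C(\varphi,b)$ such that for every $u\in X_{s,\frac12}$, $$\|\varphi u\|_{X_{s,b}}\le C\,\|u\|_{X_{s,\frac12}}.$$
   Context: $\mathbb T=\mathbb R/2\pi\mathbb Z$. For $u(x,t)$ on $\mathbb T\times\mathbb R$, $\hat u(\xi,\tau)$ ($\xi\in\mathbb Z$, $\tau\in\mathbb R$) is the space-time Fourier transform, with the convention that solutions of $\partial_tu+\partial_x^3u=0$ have $\hat u$ supported on $\tau=\xi^3$. $\langle a\rangle=(1+|a|^2)^{1/2}$. For $s,b\in\mathbb R$, $X_{s,b}$ is the completion of Schwartz functions under $\|u\|_{X_{s,b}}=\big(\sum_{\xi\in\mathbb Z}\frac1{2\pi}\int_{\mathbb R}\langle\xi\rangle^{2s}\langle\tau-\xi^3\rangle^{2b}|\hat u(\xi,\tau)|^2d\tau\big)^{1/2}$. (An example of admissible $\varphi$ is $\chi_{[0,\delta]}(t)e^{-\delta t}$.) *)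

theory Defs
  imports "HOL-Analysis.Analysis"
begin

definition jbr :: "real \<Rightarrow> real" where
  "jbr a = sqrt (1 + a\<^sup>2)"

text \<open>Everything is expressed on the space-time Fourier side.
  An element u of X_{s,b} is represented by its Fourier transform
  F = u-hat :: int => real => complex  (F xi tau = u-hat(xi,tau)).\<close>
definition Xsb_sq :: "real \<Rightarrow> real \<Rightarrow> (int \<Rightarrow> real \<Rightarrow> complex) \<Rightarrow> ennreal" where
  "Xsb_sq s b F =
     (\<integral>\<^sup>+ \<xi>. (\<integral>\<^sup>+ \<tau>. ennreal ((1 / (2 * pi)) * jbr (real_of_int \<xi>) powr (2 * s)
                 * jbr (\<tau> - (real_of_int \<xi>)^3) powr (2 * b) * (cmod (F \<xi> \<tau>))\<^sup>2) \<partial>lborel)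
      \<partial>count_space UNIV)"

definition in_Xsb :: "real \<Rightarrow> real \<Rightarrow> (int \<Rightarrow> real \<Rightarrow> complex) \<Rightarrow> bool" where
  "in_Xsb s b F \<longleftrightarrow> (\<forall>\<xi>. F \<xi> \<in> borel_measurable lborel) \<and> Xsb_sq s b F < \<infinity>"

text \<open>Multiplication by a function phi(t) of time only, on the Fourier side:
  with phi-hat(tau) = int phi(t) e^{-i t tau} dt and u-hat(xi,tau) = int int u e^{-i(x xi + t tau)},
  (phi u)-hat(xi,tau) = (1/2pi) int phi-hat(tau - sigma) u-hat(xi,sigma) d sigma.\<close>
definition time_mult :: "(real \<Rightarrow> complex) \<Rightarrow> (int \<Rightarrow> real \<Rightarrow> complex) \<Rightarrow> (int \<Rightarrow> real \<Rightarrow> complex)" where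
  "time_mult \<phi>h F = (\<lambda>\<xi> \<tau>. complex_of_real (1 / (2 * pi)) *
       (\<integral> \<sigma>. \<phi>h (\<tau> - \<sigma>) * F \<xi> \<sigma> \<partial>lborel))"

text \<open>phi in H^beta(R), phi given through its Fourier transform phi-hat.\<close>
definition in_Hbeta :: "real \<Rightarrow> (real \<Rightarrow> complex) \<Rightarrow> bool" where
  "in_Hbeta \<beta> \<phi>h \<longleftrightarrow> \<phi>h \<in> borel_measurable lborel \<and>
     (\<integral>\<^sup>+ \<tau>. ennreal (jbr \<tau> powr (2 * \<beta>) * (cmod (\<phi>h \<tau>))\<^sup>2) \<partial>lborel) < \<infinity>"

end

theory Submission
  imports Defs
begin


lemma jbr_ge1: "1 \<le> jbr x"
  unfolding jbr_def by simp
lemma jbr_pos: "0 < jbr x"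
  using jbr_ge1[of x] by linarith
lemma jbr_ge_abs: "\<bar>x\<bar> \<le> jbr x"
  unfolding jbr_def by (simp add: real_le_rsqrt)
lemma jbr_le: "jbr x \<le> 1 + \<bar>x\<bar>"
  unfolding jbr_def by (rule real_le_lsqrt) (auto simp: power2_eq_square algebra_simps)
lemma jbr_ge_half: "1 + \<bar>x\<bar> \<le> 2 * jbr x"
proof -
  have "0 \<le> (\<bar>x\<bar> - 1)^2" by simp
  hence "2*\<bar>x\<bar> \<le> 1 + x^2" by (simp add: power2_eq_square algebra_simps abs_mult_self_eq)
  hence "((1 + \<bar>x\<bar>)/2)^2 \<le> 1 + x^2"
    by (simp add: power2_eq_square field_simps abs_mult_self_eq)
  hence "(1 + \<bar>x\<bar>)/2 \<le> jbr x" unfolding jbr_def by (rule real_le_rsqrt)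
  thus ?thesis by simp
qed
lemma jbr_mono: "\<bar>x\<bar> \<le> \<bar>y\<bar> \<Longrightarrow> jbr x \<le> jbr y"
  unfolding jbr_def by (simp add: power_mono abs_le_square_iff)
lemma jbr_scale: "1 \<le> c \<Longrightarrow> \<bar>x\<bar> \<le> c * \<bar>y\<bar> \<Longrightarrow> jbr x \<le> c * jbr y"
proof -
  assume c: "1 \<le> c" and h: "\<bar>x\<bar> \<le> c * \<bar>y\<bar>"
  have "x^2 \<le> (c*\<bar>y\<bar>)^2" using h by (metis abs_ge_zero power2_abs power_mono)
  hence 1: "x^2 \<le> c^2 * y^2" by (simp add: power_mult_distrib)
  have "1 \<le> c^2" using c by (simp add: one_le_power)
  hence "1 + x^2 \<le> c^2 * (1 + y^2)" using 1 by (simp add: algebra_simps)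
  also have "\<dots> = (c * jbr y)^2" unfolding jbr_def by (simp add: power_mult_distrib)
  finally show ?thesis unfolding jbr_def[of x] using c jbr_pos[of y]
    by (intro real_le_lsqrt) auto
qed
lemma jbr_minus: "jbr (-x) = jbr x" unfolding jbr_def by simp
lemma jbr_borel[measurable]: "jbr \<in> borel_measurable borel"
  unfolding jbr_def by measurable



lemma half_line_int:
  assumes r: "1 < r"
  shows "(\<integral>\<^sup>+x. ennreal ((1 + x) powr (-r)) * indicator {0..} x \<partial>lborel) = ennreal (1/(r-1))"
proof -
  define F where "F = (\<lambda>x::real. - ((1 + x) powr (1-r)) / (r-1))"
  have "(\<integral>\<^sup>+x. ennreal ((1 + x) powr (-r)) * indicator {0..} x \<partial>lborel) = ennreal (0 - F 0)"
  proof (rule nn_integral_FTC_atLeast)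
    show "(\<lambda>x. (1 + x) powr (-r)) \<in> borel_measurable borel" by measurable
    fix x :: real assume x: "0 \<le> x"
    show "DERIV F x :> (1 + x) powr (-r)"
    proof -
      have "DERIV (\<lambda>x. (1 + x) powr (1-r)) x :> (1-r) * (1 + x) powr (1 - r - of_nat 1) * 1"
        using x by (intro DERIV_fun_powr derivative_eq_intros) auto
      hence "DERIV (\<lambda>x. - ((1 + x) powr (1-r)) / (r-1)) x :> - ((1-r) * (1 + x) powr (1 - r - of_nat 1) * 1) / (r-1)"
        by (intro derivative_eq_intros) (use x r in auto)
      moreover have "- ((1-r) * (1 + x) powr (1 - r - of_nat 1) * 1) / (r-1) = (1 + x) powr (-r)"
        using r by (simp add: field_simps)
      ultimately show ?thesis unfolding F_def by simp
    qed
    show "0 \<le> (1 + x) powr (-r)" by simp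
  next
    have "((\<lambda>x. (1 + x) powr (1-r)) \<longlongrightarrow> 0) at_top"
      using r by (intro tendsto_neg_powr filterlim_tendsto_add_at_top[OF tendsto_const filterlim_ident]) auto
    then show "(F \<longlongrightarrow> 0) at_top"
      unfolding F_def using tendsto_divide[OF tendsto_minus[OF \<open>((\<lambda>x. (1 + x) powr (1-r)) \<longlongrightarrow> 0) at_top\<close>] tendsto_const[of "r-1"]] using r by simp
  qed
  thus ?thesis by (simp add: F_def)
qed



lemma reflect_int:
  fixes h :: "real \<Rightarrow> ennreal"
  assumes [measurable]: "h \<in> borel_measurable borel"
  shows "(\<integral>\<^sup>+x. h (- x) \<partial>lborel) = (\<integral>\<^sup>+x. h x \<partial>lborel)"
  using nn_integral_real_affine[of h "-1" 0] by simp

lemma shift_int: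
  fixes h :: "real \<Rightarrow> ennreal"
  assumes [measurable]: "h \<in> borel_measurable borel"
  shows "(\<integral>\<^sup>+x. h (x - c) \<partial>lborel) = (\<integral>\<^sup>+x. h x \<partial>lborel)"
  using nn_integral_real_affine[of h 1 "-c"] by simp

lemma shift_int2:
  fixes h :: "real \<Rightarrow> ennreal"
  assumes [measurable]: "h \<in> borel_measurable borel"
  shows "(\<integral>\<^sup>+x. h (c - x) \<partial>lborel) = (\<integral>\<^sup>+x. h x \<partial>lborel)"
  using nn_integral_real_affine[of h "-1" c] by simp

lemma Kfin:
  assumes r: "1 < r"
  shows "(\<integral>\<^sup>+x. ennreal (jbr x powr (-r)) \<partial>lborel) < \<infinity>"
proof -
  define h where "h = (\<lambda>x::real. ennreal ((1 + x) powr (-r)) * indicator {0..} x)"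
  have hm[measurable]: "h \<in> borel_measurable borel" unfolding h_def by measurable
  have pt: "ennreal (jbr x powr (-r)) \<le> ennreal (2 powr r) * (h x + h (-x))" for x
  proof -
    have "jbr x powr (-r) \<le> ((1 + \<bar>x\<bar>)/2) powr (-r)"
      by (rule powr_mono2') (use r jbr_ge_half[of x] in auto)
    also have "\<dots> = 2 powr r * (1 + \<bar>x\<bar>) powr (-r)"
      by (simp add: powr_divide powr_minus field_simps)
    finally have 1: "jbr x powr (-r) \<le> 2 powr r * (1 + \<bar>x\<bar>) powr (-r)" .
    have "ennreal ((1 + \<bar>x\<bar>) powr (-r)) \<le> h x + h (-x)"
      unfolding h_def by (cases "0 \<le> x") (auto simp: indicator_def)
    hence "ennreal (2 powr r) * ennreal ((1 + \<bar>x\<bar>) powr (-r)) \<le> ennreal (2 powr r) * (h x + h (-x))"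
      by (rule mult_left_mono) simp
    moreover have "ennreal (jbr x powr (-r)) \<le> ennreal (2 powr r) * ennreal ((1 + \<bar>x\<bar>) powr (-r))"
      using 1 by (simp add: ennreal_mult[symmetric] ennreal_leI)
    ultimately show ?thesis by (rule order_trans[rotated])
  qed
  have "(\<integral>\<^sup>+x. ennreal (jbr x powr (-r)) \<partial>lborel) \<le> (\<integral>\<^sup>+x. ennreal (2 powr r) * (h x + h (-x)) \<partial>lborel)"
    by (rule nn_integral_mono) (rule pt)
  also have "\<dots> = ennreal (2 powr r) * ((\<integral>\<^sup>+x. h x \<partial>lborel) + (\<integral>\<^sup>+x. h (-x) \<partial>lborel))"
    by (simp add: nn_integral_cmult nn_integral_add)
  also have "\<dots> = ennreal (2 powr r) * (2 * ennreal (1/(r-1)))"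
    using reflect_int[OF hm] half_line_int[OF r] unfolding h_def by (simp add: mult_2)
  also have "\<dots> < \<infinity>" by (simp add: ennreal_mult_less_top)
  finally show ?thesis .
qed



lemma schur:
  fixes k :: "real \<times> real \<Rightarrow> real" and G :: "real \<Rightarrow> ennreal"
  assumes km[measurable]: "k \<in> borel_measurable (lborel \<Otimes>\<^sub>M lborel)"
    and k0: "\<And>z. 0 \<le> k z"
    and Gm[measurable]: "G \<in> borel_measurable lborel"
    and C1: "\<And>x. (\<integral>\<^sup>+y. ennreal (k (x,y)) \<partial>lborel) \<le> C1"
    and C2: "\<And>y. (\<integral>\<^sup>+x. ennreal (k (x,y)) \<partial>lborel) \<le> C2"
  shows "(\<integral>\<^sup>+x. (\<integral>\<^sup>+y. ennreal (k (x,y)) * G y \<partial>lborel)^2 \<partial>lborel) \<le> C1 * C2 * (\<integral>\<^sup>+y. G y ^2 \<partial>lborel)"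
proof -
  have pt: "(\<integral>\<^sup>+y. ennreal (k (x,y)) * G y \<partial>lborel)^2 \<le> C1 * (\<integral>\<^sup>+y. ennreal (k (x,y)) * G y^2 \<partial>lborel)" for x
  proof -
    have "(\<integral>\<^sup>+y. ennreal (k (x,y)) * G y \<partial>lborel) = (\<integral>\<^sup>+y. ennreal (sqrt (k (x,y))) * (ennreal (sqrt (k (x,y))) * G y) \<partial>lborel)"
      by (intro nn_integral_cong) (simp add: mult.assoc[symmetric] ennreal_mult'[symmetric] k0)
    also have "\<dots>^2 \<le> (\<integral>\<^sup>+y. ennreal (sqrt (k (x,y)))^2 \<partial>lborel) * (\<integral>\<^sup>+y. (ennreal (sqrt (k (x,y))) * G y)^2 \<partial>lborel)"
      by (rule Cauchy_Schwarz_nn_integral) measurable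
    also have "(\<integral>\<^sup>+y. ennreal (sqrt (k (x,y)))^2 \<partial>lborel) = (\<integral>\<^sup>+y. ennreal (k (x,y)) \<partial>lborel)"
      by (intro nn_integral_cong) (simp add: ennreal_power k0)
    also have "(\<integral>\<^sup>+y. (ennreal (sqrt (k (x,y))) * G y)^2 \<partial>lborel) = (\<integral>\<^sup>+y. ennreal (k (x,y)) * G y^2 \<partial>lborel)"
      by (intro nn_integral_cong) (simp add: power_mult_distrib ennreal_power k0)
    finally show ?thesis using C1[of x] by (meson mult_right_mono order_trans zero_le)
  qed
  have "(\<integral>\<^sup>+x. (\<integral>\<^sup>+y. ennreal (k (x,y)) * G y \<partial>lborel)^2 \<partial>lborel)
      \<le> (\<integral>\<^sup>+x. C1 * (\<integral>\<^sup>+y. ennreal (k (x,y)) * G y^2 \<partial>lborel) \<partial>lborel)"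
    by (rule nn_integral_mono) (rule pt)
  also have "\<dots> = C1 * (\<integral>\<^sup>+x. (\<integral>\<^sup>+y. ennreal (k (x,y)) * G y^2 \<partial>lborel) \<partial>lborel)"
    by (rule nn_integral_cmult) measurable
  also have "(\<integral>\<^sup>+x. (\<integral>\<^sup>+y. ennreal (k (x,y)) * G y^2 \<partial>lborel) \<partial>lborel)
      = (\<integral>\<^sup>+y. (\<integral>\<^sup>+x. ennreal (k (x,y)) * G y^2 \<partial>lborel) \<partial>lborel)"
    by (rule lborel_pair.Fubini'[symmetric]) measurable
  also have "\<dots> = (\<integral>\<^sup>+y. (\<integral>\<^sup>+x. ennreal (k (x,y)) \<partial>lborel) * G y^2 \<partial>lborel)"
    by (intro nn_integral_cong nn_integral_multc) measurable
  also have "\<dots> \<le> (\<integral>\<^sup>+y. C2 * G y^2 \<partial>lborel)"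
    by (intro nn_integral_mono mult_right_mono C2) simp
  also have "\<dots> = C2 * (\<integral>\<^sup>+y. G y^2 \<partial>lborel)"
    by (rule nn_integral_cmult) measurable
  finally show ?thesis by (simp add: mult_left_mono mult.assoc)
qed

lemma hilbert_schmidt:
  fixes k :: "real \<times> real \<Rightarrow> real" and G :: "real \<Rightarrow> ennreal"
  assumes km[measurable]: "k \<in> borel_measurable (lborel \<Otimes>\<^sub>M lborel)"
    and Gm[measurable]: "G \<in> borel_measurable lborel"
  shows "(\<integral>\<^sup>+x. (\<integral>\<^sup>+y. ennreal (k (x,y)) * G y \<partial>lborel)^2 \<partial>lborel)
     \<le> (\<integral>\<^sup>+x. \<integral>\<^sup>+y. ennreal (k (x,y))^2 \<partial>lborel \<partial>lborel) * (\<integral>\<^sup>+y. G y ^2 \<partial>lborel)"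
proof -
  have "(\<integral>\<^sup>+x. (\<integral>\<^sup>+y. ennreal (k (x,y)) * G y \<partial>lborel)^2 \<partial>lborel)
     \<le> (\<integral>\<^sup>+x. (\<integral>\<^sup>+y. ennreal (k (x,y))^2 \<partial>lborel) * (\<integral>\<^sup>+y. G y ^2 \<partial>lborel) \<partial>lborel)"
    by (intro nn_integral_mono Cauchy_Schwarz_nn_integral) measurable
  also have "\<dots> = (\<integral>\<^sup>+x. \<integral>\<^sup>+y. ennreal (k (x,y))^2 \<partial>lborel \<partial>lborel) * (\<integral>\<^sup>+y. G y ^2 \<partial>lborel)"
    by (rule nn_integral_multc) measurable
  finally show ?thesis .
qed



lemma double_shift:
  fixes H :: "real \<times> real \<Rightarrow> ennreal"
  assumes Hm[measurable]: "H \<in> borel_measurable (lborel \<Otimes>\<^sub>M lborel)"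
  shows "(\<integral>\<^sup>+\<tau>. \<integral>\<^sup>+\<sigma>. H (\<tau> - \<sigma>, \<sigma> - a) \<partial>lborel \<partial>lborel) = (\<integral>\<^sup>+u. \<integral>\<^sup>+v. H (u, v) \<partial>lborel \<partial>lborel)"
proof -
  have "(\<integral>\<^sup>+\<tau>. \<integral>\<^sup>+\<sigma>. H (\<tau> - \<sigma>, \<sigma> - a) \<partial>lborel \<partial>lborel) = (\<integral>\<^sup>+\<tau>. \<integral>\<^sup>+v. H (\<tau> - a - v, v) \<partial>lborel \<partial>lborel)"
    apply (rule nn_integral_cong)
    subgoal for \<tau> using shift_int[of "\<lambda>v. H (\<tau> - a - v, v)" a] by simp
    done
  also have "\<dots> = (\<integral>\<^sup>+v. \<integral>\<^sup>+\<tau>. H (\<tau> - a - v, v) \<partial>lborel \<partial>lborel)"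
    by (rule lborel_pair.Fubini'[symmetric]) measurable
  also have "\<dots> = (\<integral>\<^sup>+v. \<integral>\<^sup>+u. H (u, v) \<partial>lborel \<partial>lborel)"
    apply (rule nn_integral_cong)
    subgoal for v using shift_int[of "\<lambda>u. H (u, v)" "a + v"] by (simp add: diff_diff_eq)
    done
  also have "\<dots> = (\<integral>\<^sup>+u. \<integral>\<^sup>+v. H (u, v) \<partial>lborel \<partial>lborel)"
    by (rule lborel_pair.Fubini') measurable
  finally show ?thesis .
qed



lemma sum_sq_ennreal: "((x::ennreal) + y)^2 \<le> 2 * (x^2 + y^2)"
proof -
  have "(x + y)^2 = x^2 + y^2 + 2*x*y" by (rule power2_sum)
  also have "\<dots> \<le> x^2 + y^2 + (x^2 + y^2)" by (rule add_left_mono) (rule sum_of_squares_ge_ennreal)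
  also have "\<dots> = 2 * (x^2 + y^2)" by (simp add: mult_2)
  finally show ?thesis .
qed

lemma cs_real:
  fixes h1 h2 :: "real \<Rightarrow> real"
  assumes [measurable]: "h1 \<in> borel_measurable borel" "h2 \<in> borel_measurable borel"
    and "\<And>x. 0 \<le> h1 x" "\<And>x. 0 \<le> h2 x"
  shows "(\<integral>\<^sup>+x. ennreal (h1 x * h2 x) \<partial>lborel)^2
     \<le> (\<integral>\<^sup>+x. ennreal (h1 x ^ 2) \<partial>lborel) * (\<integral>\<^sup>+x. ennreal (h2 x ^ 2) \<partial>lborel)"
proof -
  have "(\<integral>\<^sup>+x. ennreal (h1 x * h2 x) \<partial>lborel) = (\<integral>\<^sup>+x. ennreal (h1 x) * ennreal (h2 x) \<partial>lborel)"
    using assms(3,4) by (simp add: ennreal_mult)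
  also have "\<dots>^2 \<le> (\<integral>\<^sup>+x. ennreal (h1 x)^2 \<partial>lborel) * (\<integral>\<^sup>+x. ennreal (h2 x)^2 \<partial>lborel)"
    by (rule Cauchy_Schwarz_nn_integral) measurable
  finally show ?thesis using assms(3,4) by (simp add: ennreal_power)
qed

lemma sq_bound:
  fixes X :: ennreal
  assumes "X^2 \<le> ennreal c" "0 \<le> c"
  shows "X \<le> ennreal (sqrt c)"
proof (cases X)
  case (real x)
  then have "ennreal (x^2) \<le> ennreal c" using assms by (simp add: ennreal_power)
  moreover note \<open>0 \<le> c\<close>
  ultimately have "x^2 \<le> c" by (auto simp add: ennreal_le_iff2)
  hence "x \<le> sqrt c" using real by (intro real_le_rsqrt) auto
  thus ?thesis using real by (simp add: ennreal_leI)
next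
  case top
  then show ?thesis using assms by (simp add: power2_eq_square top_unique)
qed

lemma pq_bound:
  fixes x y p q :: real
  assumes "1 \<le> x" "1 \<le> y" "0 \<le> p" "0 \<le> q"
  shows "x powr (-p) * y powr (-q) \<le> x powr (-(p+q)) + y powr (-(p+q))"
proof (cases "x \<le> y")
  case True
  have "y powr (-q) \<le> x powr (-q)" using True assms by (intro powr_mono2') auto
  hence "x powr (-p) * y powr (-q) \<le> x powr (-p) * x powr (-q)" by (simp add: mult_left_mono)
  also have "\<dots> = x powr (-(p+q))" using assms by (simp add: powr_add[symmetric])
  finally show ?thesis using powr_ge_zero[of y "-(p+q)"] by linarith
next
  case False
  have "x powr (-p) \<le> y powr (-p)" using False assms by (intro powr_mono2') auto
  hence "x powr (-p) * y powr (-q) \<le> y powr (-p) * y powr (-q)" by (simp add: mult_right_mono)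
  also have "\<dots> = y powr (-(p+q))" using assms by (simp add: powr_add[symmetric])
  finally show ?thesis using powr_ge_zero[of x "-(p+q)"] by linarith
qed



lemma powr_sq: "0 < (x::real) \<Longrightarrow> (x powr a)^2 = x powr (2*a)"
proof -
  have "(x powr a)^2 = x powr a * x powr a" by (rule power2_eq_square)
  also have "\<dots> = x powr (a + a)" by (rule powr_add[symmetric])
  also have "a + a = 2 * a" by simp
  finally show ?thesis .
qed

lemma aux_add1: "0 \<le> (c::real) \<Longrightarrow> 0 \<le> B \<Longrightarrow> X \<le> c * Y \<Longrightarrow> X \<le> c * (Y + B)"
proof -
  assume "0 \<le> c" "0 \<le> B" "X \<le> c * Y"
  moreover have "c * Y \<le> c * (Y + B)" using \<open>0 \<le> c\<close> \<open>0 \<le> B\<close> by (intro mult_left_mono) auto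
  ultimately show ?thesis by linarith
qed
lemma aux_add2: "0 \<le> (c::real) \<Longrightarrow> 0 \<le> B \<Longrightarrow> X \<le> c * Y \<Longrightarrow> X \<le> c * (B + Y)"
proof -
  assume "0 \<le> c" "0 \<le> B" "X \<le> c * Y"
  moreover have "c * Y \<le> c * (B + Y)" using \<open>0 \<le> c\<close> \<open>0 \<le> B\<close> by (intro mult_left_mono) auto
  ultimately show ?thesis by linarith
qed

lemma region_bound:
  fixes t s gv fv b :: real
  assumes b0: "0 \<le> b" and g0: "0 \<le> gv" and f0: "0 \<le> fv"
  shows "jbr t powr b * (gv * fv) \<le> 2 powr b *
     ((gv * jbr s powr (b - 1/2) * (if \<bar>t\<bar> < 2 * \<bar>s\<bar> then 1 else 0)) * (sqrt (jbr s) * fv)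
    + (gv * jbr (t - s) powr b * jbr s powr (-1/2) * (if \<bar>s\<bar> \<le> \<bar>t - s\<bar> then 1 else 0)) * (sqrt (jbr s) * fv))"
proof -
  have Js: "sqrt (jbr s) = jbr s powr (1/2)" using jbr_pos[of s] by (simp add: powr_half_sqrt)
  have J1: "jbr s powr (b - 1/2) * sqrt (jbr s) = jbr s powr b"
    unfolding Js powr_add[symmetric] by simp
  have J2: "jbr s powr (-1/2) * sqrt (jbr s) = 1"
    unfolding Js powr_add[symmetric] using jbr_pos[of s] by simp
  have gf: "0 \<le> gv * fv" using g0 f0 by simp
  have nA: "0 \<le> (gv * jbr s powr (b - 1/2) * (if \<bar>t\<bar> < 2 * \<bar>s\<bar> then 1 else 0)) * (sqrt (jbr s) * fv)"
    using g0 f0 jbr_pos[of s] by auto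
  have nB: "0 \<le> (gv * jbr (t - s) powr b * jbr s powr (-1/2) * (if \<bar>s\<bar> \<le> \<bar>t - s\<bar> then 1 else 0)) * (sqrt (jbr s) * fv)"
    using g0 f0 jbr_pos[of s] by auto
  show ?thesis
  proof (cases "\<bar>t\<bar> < 2 * \<bar>s\<bar>")
    case True
    have "jbr t \<le> 2 * jbr s" by (rule jbr_scale) (use True in auto)
    hence "jbr t powr b \<le> (2 * jbr s) powr b" using b0 jbr_pos[of t] by (intro powr_mono2) auto
    also have "\<dots> = 2 powr b * jbr s powr b" by (simp add: powr_mult)
    finally have 1: "jbr t powr b \<le> 2 powr b * jbr s powr b" .
    have 2: "(gv * jbr s powr (b - 1/2) * (if \<bar>t\<bar> < 2 * \<bar>s\<bar> then 1 else 0)) * (sqrt (jbr s) * fv)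
       = jbr s powr b * (gv * fv)"
    proof -
      have "(gv * jbr s powr (b - 1/2) * (if \<bar>t\<bar> < 2 * \<bar>s\<bar> then 1 else 0)) * (sqrt (jbr s) * fv)
         = (jbr s powr (b - 1/2) * sqrt (jbr s)) * (gv * fv)"
        using True by (simp only: if_True mult_1_right mult_ac)
      thus ?thesis unfolding J1 .
    qed
    have 3: "jbr t powr b * (gv * fv) \<le> 2 powr b * (jbr s powr b * (gv * fv))"
      using mult_right_mono[OF 1 gf] by (simp only: mult.assoc)
    show ?thesis unfolding 2 by (rule aux_add1[OF _ nB 3]) simp
  next
    case False
    have tri: "\<bar>t\<bar> \<le> \<bar>t - s\<bar> + \<bar>s\<bar>" using abs_triangle_ineq[of "t - s" s] by simp
    have aux: "\<And>A B C::real. \<not> A < 2*C \<Longrightarrow> A \<le> B + C \<Longrightarrow> A \<le> 2*B \<and> C \<le> B" by linarith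
    have ts: "\<bar>t\<bar> \<le> 2 * \<bar>t - s\<bar>" using aux[OF False tri] by blast
    have st: "\<bar>s\<bar> \<le> \<bar>t - s\<bar>" using aux[OF False tri] by blast
    have "jbr t \<le> 2 * jbr (t - s)" by (rule jbr_scale) (use ts in auto)
    hence "jbr t powr b \<le> (2 * jbr (t - s)) powr b" using b0 jbr_pos[of t] by (intro powr_mono2) auto
    also have "\<dots> = 2 powr b * jbr (t - s) powr b" by (simp add: powr_mult)
    finally have 1: "jbr t powr b \<le> 2 powr b * jbr (t - s) powr b" .
    have 2: "(gv * jbr (t - s) powr b * jbr s powr (-1/2) * (if \<bar>s\<bar> \<le> \<bar>t - s\<bar> then 1 else 0)) * (sqrt (jbr s) * fv)
       = jbr (t - s) powr b * (gv * fv)"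
    proof -
      have "(gv * jbr (t - s) powr b * jbr s powr (-1/2) * (if \<bar>s\<bar> \<le> \<bar>t - s\<bar> then 1 else 0)) * (sqrt (jbr s) * fv)
         = (jbr s powr (-1/2) * sqrt (jbr s)) * (jbr (t - s) powr b * (gv * fv))"
        using st by (simp only: if_True mult_1_right mult_ac)
      thus ?thesis unfolding J2 by simp
    qed
    have 3: "jbr t powr b * (gv * fv) \<le> 2 powr b * (jbr (t - s) powr b * (gv * fv))"
      using mult_right_mono[OF 1 gf] by (simp only: mult.assoc)
    show ?thesis unfolding 2 by (rule aux_add2[OF _ nA 3]) simp
  qed
qed



lemma h2A_bound:
  fixes x y b \<beta> :: real
  assumes "0 \<le> b" "b < 1/2" "0 \<le> \<beta>"
  shows "(jbr x powr (-\<beta>) * jbr y powr (b - 1/2))^2 \<le> jbr x powr (-(2*\<beta>+1-2*b)) + jbr y powr (-(2*\<beta>+1-2*b))"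
proof -
  have "(jbr x powr (-\<beta>) * jbr y powr (b - 1/2))^2 = jbr x powr (-(2*\<beta>)) * jbr y powr (-(1-2*b))"
    using jbr_pos[of x] jbr_pos[of y] by (simp add: power_mult_distrib powr_sq)
  also have "\<dots> \<le> jbr x powr (-(2*\<beta>+(1-2*b))) + jbr y powr (-(2*\<beta>+(1-2*b)))"
    using assms by (intro pq_bound jbr_ge1) auto
  finally show ?thesis by (simp add: algebra_simps)
qed

lemma h2A'_bound:
  fixes u s b \<beta> :: real
  assumes "0 \<le> b" "b < 1/2" "0 \<le> \<beta>"
  shows "(jbr u powr (-\<beta>) * jbr s powr (b - 1/2) * (if \<bar>u\<bar> \<le> 3 * \<bar>s\<bar> then 1 else 0))^2
     \<le> 3 powr (1 - 2*b) * jbr u powr (-(2*\<beta>+1-2*b))"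
proof (cases "\<bar>u\<bar> \<le> 3 * \<bar>s\<bar>")
  case True
  have ju: "jbr u \<le> 3 * jbr s" by (rule jbr_scale) (use True in auto)
  have "jbr u powr (1 - 2*b) \<le> (3 * jbr s) powr (1 - 2*b)"
    using ju assms jbr_pos[of u] by (intro powr_mono2) auto
  also have "\<dots> = 3 powr (1 - 2*b) * jbr s powr (1 - 2*b)" by (simp add: powr_mult)
  finally have 1: "jbr u powr (1 - 2*b) \<le> 3 powr (1 - 2*b) * jbr s powr (1 - 2*b)" .
  have a: "(jbr u powr (-\<beta>) * jbr s powr (b - 1/2) * (if \<bar>u\<bar> \<le> 3 * \<bar>s\<bar> then 1 else 0))^2
      = jbr u powr (2*(-\<beta>)) * jbr s powr (2*(b - 1/2))"
    using True jbr_pos[of u] jbr_pos[of s] by (simp add: power_mult_distrib powr_sq)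
  have e1: "2*(-\<beta>) = -(2*\<beta>+1-2*b) + (1 - 2*b)" by simp
  have e2: "2*(b - 1/2) = -(1 - 2*b)" by simp
  have "(jbr u powr (-\<beta>) * jbr s powr (b - 1/2) * (if \<bar>u\<bar> \<le> 3 * \<bar>s\<bar> then 1 else 0))^2
      = jbr u powr (-(2*\<beta>+1-2*b)) * (jbr u powr (1 - 2*b) * jbr s powr (-(1 - 2*b)))"
    unfolding a e1 e2 powr_add by (simp only: mult.assoc)
  also have "\<dots> \<le> jbr u powr (-(2*\<beta>+1-2*b)) * (3 powr (1 - 2*b) * jbr s powr (1 - 2*b) * jbr s powr (-(1 - 2*b)))"
    using 1 by (intro mult_left_mono mult_right_mono) auto
  also have "jbr s powr (1 - 2*b) * jbr s powr (-(1 - 2*b)) = 1"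
    using jbr_pos[of s] by (simp add: powr_add[symmetric])
  hence "jbr u powr (-(2*\<beta>+1-2*b)) * (3 powr (1 - 2*b) * jbr s powr (1 - 2*b) * jbr s powr (-(1 - 2*b)))
      = 3 powr (1 - 2*b) * jbr u powr (-(2*\<beta>+1-2*b))"
    by (simp add: mult.assoc)
  finally show ?thesis .
qed simp

lemma hB_bound:
  fixes u v gv b \<beta> :: real
  assumes "0 \<le> b" "b < \<beta>" "0 \<le> gv"
  shows "(gv * jbr u powr b * jbr v powr (-1/2) * (if \<bar>v\<bar> \<le> \<bar>u\<bar> then 1 else 0))^2
     \<le> (jbr u powr (2*\<beta>) * gv^2) * jbr v powr (-(2*\<beta>+1-2*b))"
proof (cases "\<bar>v\<bar> \<le> \<bar>u\<bar>")
  case True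
  have 1: "jbr v powr (2*\<beta>-2*b) \<le> jbr u powr (2*\<beta>-2*b)"
    using True assms jbr_pos[of v] by (intro powr_mono2 jbr_mono) auto
  have a: "(gv * jbr u powr b * jbr v powr (-1/2) * (if \<bar>v\<bar> \<le> \<bar>u\<bar> then 1 else 0))^2
     = gv^2 * jbr u powr (2*b) * jbr v powr (2*(-1/2))"
    using True jbr_pos[of u] jbr_pos[of v] by (simp add: power_mult_distrib powr_sq)
  have e1: "2*(-1/2) = -(2*\<beta>+1-2*b) + (2*\<beta>-2*b)" by simp
  have "(gv * jbr u powr b * jbr v powr (-1/2) * (if \<bar>v\<bar> \<le> \<bar>u\<bar> then 1 else 0))^2
     = (gv^2 * jbr u powr (2*b) * jbr v powr (-(2*\<beta>+1-2*b))) * jbr v powr (2*\<beta>-2*b)"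
    unfolding a e1 powr_add by (simp only: mult.assoc)
  also have "\<dots> \<le> (gv^2 * jbr u powr (2*b) * jbr v powr (-(2*\<beta>+1-2*b))) * jbr u powr (2*\<beta>-2*b)"
    using 1 by (intro mult_left_mono) auto
  also have "\<dots> = gv^2 * (jbr u powr (2*b) * jbr u powr (2*\<beta>-2*b)) * jbr v powr (-(2*\<beta>+1-2*b))"
    by (simp only: mult_ac)
  also have "jbr u powr (2*b) * jbr u powr (2*\<beta>-2*b) = jbr u powr (2*\<beta>)"
    by (simp add: powr_add[symmetric])
  finally show ?thesis by (simp only: mult_ac)
qed simp



lemma schur_C1:
  fixes g :: "real \<Rightarrow> real" and a b \<beta> \<tau> Ar Kr :: real
  assumes gm[measurable]: "g \<in> borel_measurable borel" and g0: "\<And>u. 0 \<le> g u"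
    and b0: "0 \<le> b" and bb: "b < \<beta>" and b2: "\<beta> < 1/2"
    and Ar: "(\<integral>\<^sup>+u. ennreal (jbr u powr (2*\<beta>) * (g u)^2) \<partial>lborel) = ennreal Ar"
    and Kr: "(\<integral>\<^sup>+x. ennreal (jbr x powr (-(2*\<beta>+1-2*b))) \<partial>lborel) = ennreal Kr"
    and Ar0: "0 \<le> Ar" and Kr0: "0 \<le> Kr"
  shows "(\<integral>\<^sup>+\<sigma>. ennreal (g (\<tau> - \<sigma>) * jbr (\<sigma> - a) powr (b - 1/2) * (if \<bar>\<tau> - a\<bar> < 2 * \<bar>\<sigma> - a\<bar> then 1 else 0)) \<partial>lborel)
     \<le> ennreal (sqrt (Ar * (2 * Kr)))"
proof (rule sq_bound)
  show "0 \<le> Ar * (2 * Kr)" using Ar0 Kr0 by simp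
  define h1 where "h1 = (\<lambda>\<sigma>. g (\<tau> - \<sigma>) * jbr (\<tau> - \<sigma>) powr \<beta>)"
  define h2 where "h2 = (\<lambda>\<sigma>. jbr (\<tau> - \<sigma>) powr (-\<beta>) * jbr (\<sigma> - a) powr (b - 1/2))"
  have [measurable]: "h1 \<in> borel_measurable borel" "h2 \<in> borel_measurable borel"
    unfolding h1_def h2_def by measurable
  have h10: "\<And>x. 0 \<le> h1 x" and h20: "\<And>x. 0 \<le> h2 x" unfolding h1_def h2_def using g0 by auto
  have "(\<integral>\<^sup>+\<sigma>. ennreal (g (\<tau> - \<sigma>) * jbr (\<sigma> - a) powr (b - 1/2) * (if \<bar>\<tau> - a\<bar> < 2 * \<bar>\<sigma> - a\<bar> then 1 else 0)) \<partial>lborel)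
     \<le> (\<integral>\<^sup>+\<sigma>. ennreal (h1 \<sigma> * h2 \<sigma>) \<partial>lborel)"
  proof (rule nn_integral_mono)
    fix \<sigma>
    have "jbr (\<tau> - \<sigma>) powr \<beta> * jbr (\<tau> - \<sigma>) powr (-\<beta>) = 1"
      using jbr_pos[of "\<tau> - \<sigma>"] by (simp add: powr_add[symmetric])
    hence "h1 \<sigma> * h2 \<sigma> = g (\<tau> - \<sigma>) * jbr (\<sigma> - a) powr (b - 1/2)"
      unfolding h1_def h2_def by (simp add: mult_ac)
    moreover have "g (\<tau> - \<sigma>) * jbr (\<sigma> - a) powr (b - 1/2) * (if \<bar>\<tau> - a\<bar> < 2 * \<bar>\<sigma> - a\<bar> then 1 else 0)
        \<le> g (\<tau> - \<sigma>) * jbr (\<sigma> - a) powr (b - 1/2)"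
      using g0[of "\<tau> - \<sigma>"] by auto
    ultimately show "ennreal (g (\<tau> - \<sigma>) * jbr (\<sigma> - a) powr (b - 1/2) * (if \<bar>\<tau> - a\<bar> < 2 * \<bar>\<sigma> - a\<bar> then 1 else 0))
        \<le> ennreal (h1 \<sigma> * h2 \<sigma>)" by (simp add: ennreal_leI)
  qed
  hence "(\<integral>\<^sup>+\<sigma>. ennreal (g (\<tau> - \<sigma>) * jbr (\<sigma> - a) powr (b - 1/2) * (if \<bar>\<tau> - a\<bar> < 2 * \<bar>\<sigma> - a\<bar> then 1 else 0)) \<partial>lborel)^2
     \<le> (\<integral>\<^sup>+\<sigma>. ennreal (h1 \<sigma> * h2 \<sigma>) \<partial>lborel)^2"
    by (rule power_mono) simp
  also have "\<dots> \<le> (\<integral>\<^sup>+x. ennreal (h1 x ^ 2) \<partial>lborel) * (\<integral>\<^sup>+x. ennreal (h2 x ^ 2) \<partial>lborel)"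
    by (rule cs_real) (auto intro: h10 h20)
  also have "(\<integral>\<^sup>+x. ennreal (h1 x ^ 2) \<partial>lborel) = ennreal Ar"
  proof -
    have "(\<integral>\<^sup>+x. ennreal (h1 x ^ 2) \<partial>lborel) = (\<integral>\<^sup>+x. ennreal (jbr (\<tau> - x) powr (2*\<beta>) * (g (\<tau> - x))^2) \<partial>lborel)"
      unfolding h1_def using jbr_pos by (intro nn_integral_cong) (simp add: power_mult_distrib powr_sq mult_ac)
    also have "\<dots> = ennreal Ar"
      using shift_int2[of "\<lambda>u. ennreal (jbr u powr (2*\<beta>) * (g u)^2)" \<tau>] Ar by simp
    finally show ?thesis .
  qed
  also have "(\<integral>\<^sup>+x. ennreal (h2 x ^ 2) \<partial>lborel) \<le> ennreal (2 * Kr)"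
  proof -
    have "(\<integral>\<^sup>+x. ennreal (h2 x ^ 2) \<partial>lborel)
        \<le> (\<integral>\<^sup>+x. ennreal (jbr (\<tau> - x) powr (-(2*\<beta>+1-2*b))) + ennreal (jbr (x - a) powr (-(2*\<beta>+1-2*b))) \<partial>lborel)"
    proof (rule nn_integral_mono)
      fix x
      have "h2 x ^ 2 \<le> jbr (\<tau> - x) powr (-(2*\<beta>+1-2*b)) + jbr (x - a) powr (-(2*\<beta>+1-2*b))"
        unfolding h2_def by (rule h2A_bound) (use b0 bb b2 in auto)
      thus "ennreal (h2 x ^ 2) \<le> ennreal (jbr (\<tau> - x) powr (-(2*\<beta>+1-2*b))) + ennreal (jbr (x - a) powr (-(2*\<beta>+1-2*b)))"
        by (simp add: ennreal_plus[symmetric] ennreal_leI del: ennreal_plus)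
    qed
    also have "\<dots> = (\<integral>\<^sup>+x. ennreal (jbr (\<tau> - x) powr (-(2*\<beta>+1-2*b))) \<partial>lborel) + (\<integral>\<^sup>+x. ennreal (jbr (x - a) powr (-(2*\<beta>+1-2*b))) \<partial>lborel)"
      by (rule nn_integral_add) measurable
    also have "\<dots> = ennreal Kr + ennreal Kr"
      using shift_int2[of "\<lambda>u. ennreal (jbr u powr (-(2*\<beta>+1-2*b)))" \<tau>] shift_int[of "\<lambda>u. ennreal (jbr u powr (-(2*\<beta>+1-2*b)))" a] Kr
      by simp
    also have "\<dots> = ennreal (2 * Kr)" using Kr0 by (simp add: ennreal_plus[symmetric] del: ennreal_plus)
    finally show ?thesis .
  qed
  finally show "(\<integral>\<^sup>+\<sigma>. ennreal (g (\<tau> - \<sigma>) * jbr (\<sigma> - a) powr (b - 1/2) * (if \<bar>\<tau> - a\<bar> < 2 * \<bar>\<sigma> - a\<bar> then 1 else 0)) \<partial>lborel)^2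
     \<le> ennreal (Ar * (2 * Kr))"
    using Ar0 Kr0 by (simp add: ennreal_mult mult_left_mono)
qed

lemma schur_C2:
  fixes g :: "real \<Rightarrow> real" and a b \<beta> \<sigma> Ar Kr :: real
  assumes gm[measurable]: "g \<in> borel_measurable borel" and g0: "\<And>u. 0 \<le> g u"
    and b0: "0 \<le> b" and bb: "b < \<beta>" and b2: "\<beta> < 1/2"
    and Ar: "(\<integral>\<^sup>+u. ennreal (jbr u powr (2*\<beta>) * (g u)^2) \<partial>lborel) = ennreal Ar"
    and Kr: "(\<integral>\<^sup>+x. ennreal (jbr x powr (-(2*\<beta>+1-2*b))) \<partial>lborel) = ennreal Kr"
    and Ar0: "0 \<le> Ar" and Kr0: "0 \<le> Kr"
  shows "(\<integral>\<^sup>+\<tau>. ennreal (g (\<tau> - \<sigma>) * jbr (\<sigma> - a) powr (b - 1/2) * (if \<bar>\<tau> - a\<bar> < 2 * \<bar>\<sigma> - a\<bar> then 1 else 0)) \<partial>lborel)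
     \<le> ennreal (sqrt (Ar * (3 powr (1 - 2*b) * Kr)))"
proof (rule sq_bound)
  show "0 \<le> Ar * (3 powr (1 - 2*b) * Kr)" using Ar0 Kr0 by simp
  define h1 where "h1 = (\<lambda>\<tau>. g (\<tau> - \<sigma>) * jbr (\<tau> - \<sigma>) powr \<beta>)"
  define h2 where "h2 = (\<lambda>\<tau>. jbr (\<tau> - \<sigma>) powr (-\<beta>) * jbr (\<sigma> - a) powr (b - 1/2) * (if \<bar>\<tau> - \<sigma>\<bar> \<le> 3 * \<bar>\<sigma> - a\<bar> then 1 else 0))"
  have [measurable]: "h1 \<in> borel_measurable borel" "h2 \<in> borel_measurable borel"
    unfolding h1_def h2_def by measurable
  have h10: "\<And>x. 0 \<le> h1 x" and h20: "\<And>x. 0 \<le> h2 x" unfolding h1_def h2_def using g0 by auto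
  have "(\<integral>\<^sup>+\<tau>. ennreal (g (\<tau> - \<sigma>) * jbr (\<sigma> - a) powr (b - 1/2) * (if \<bar>\<tau> - a\<bar> < 2 * \<bar>\<sigma> - a\<bar> then 1 else 0)) \<partial>lborel)
     \<le> (\<integral>\<^sup>+\<tau>. ennreal (h1 \<tau> * h2 \<tau>) \<partial>lborel)"
  proof (rule nn_integral_mono)
    fix \<tau>
    have one: "jbr (\<tau> - \<sigma>) powr \<beta> * jbr (\<tau> - \<sigma>) powr (-\<beta>) = 1"
      using jbr_pos[of "\<tau> - \<sigma>"] by (simp add: powr_add[symmetric])
    have "g (\<tau> - \<sigma>) * jbr (\<sigma> - a) powr (b - 1/2) * (if \<bar>\<tau> - a\<bar> < 2 * \<bar>\<sigma> - a\<bar> then 1 else 0) \<le> h1 \<tau> * h2 \<tau>"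
    proof (cases "\<bar>\<tau> - a\<bar> < 2 * \<bar>\<sigma> - a\<bar>")
      case True
      have tri: "\<bar>\<tau> - \<sigma>\<bar> \<le> \<bar>\<tau> - a\<bar> + \<bar>\<sigma> - a\<bar>" using abs_triangle_ineq4[of "\<tau> - a" "\<sigma> - a"] by simp
      have aux: "\<And>A B C::real. A \<le> B + C \<Longrightarrow> B < 2*C \<Longrightarrow> A \<le> 3*C" by linarith
      have "\<bar>\<tau> - \<sigma>\<bar> \<le> 3 * \<bar>\<sigma> - a\<bar>" by (rule aux[OF tri True])
      hence "h1 \<tau> * h2 \<tau> = g (\<tau> - \<sigma>) * jbr (\<sigma> - a) powr (b - 1/2)"
        unfolding h1_def h2_def using one by (simp add: mult_ac)
      thus ?thesis using True by simp
    next
      case False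
      thus ?thesis using h10[of \<tau>] h20[of \<tau>] by simp
    qed
    thus "ennreal (g (\<tau> - \<sigma>) * jbr (\<sigma> - a) powr (b - 1/2) * (if \<bar>\<tau> - a\<bar> < 2 * \<bar>\<sigma> - a\<bar> then 1 else 0))
        \<le> ennreal (h1 \<tau> * h2 \<tau>)" by (simp add: ennreal_leI)
  qed
  hence "(\<integral>\<^sup>+\<tau>. ennreal (g (\<tau> - \<sigma>) * jbr (\<sigma> - a) powr (b - 1/2) * (if \<bar>\<tau> - a\<bar> < 2 * \<bar>\<sigma> - a\<bar> then 1 else 0)) \<partial>lborel)^2
     \<le> (\<integral>\<^sup>+\<tau>. ennreal (h1 \<tau> * h2 \<tau>) \<partial>lborel)^2"
    by (rule power_mono) simp
  also have "\<dots> \<le> (\<integral>\<^sup>+x. ennreal (h1 x ^ 2) \<partial>lborel) * (\<integral>\<^sup>+x. ennreal (h2 x ^ 2) \<partial>lborel)"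
    by (rule cs_real) (auto intro: h10 h20)
  also have "(\<integral>\<^sup>+x. ennreal (h1 x ^ 2) \<partial>lborel) = ennreal Ar"
  proof -
    have "(\<integral>\<^sup>+x. ennreal (h1 x ^ 2) \<partial>lborel) = (\<integral>\<^sup>+x. ennreal (jbr (x - \<sigma>) powr (2*\<beta>) * (g (x - \<sigma>))^2) \<partial>lborel)"
      unfolding h1_def using jbr_pos by (intro nn_integral_cong) (simp add: power_mult_distrib powr_sq mult_ac)
    also have "\<dots> = ennreal Ar"
      using shift_int[of "\<lambda>u. ennreal (jbr u powr (2*\<beta>) * (g u)^2)" \<sigma>] Ar by simp
    finally show ?thesis .
  qed
  also have "(\<integral>\<^sup>+x. ennreal (h2 x ^ 2) \<partial>lborel) \<le> ennreal (3 powr (1 - 2*b) * Kr)"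
  proof -
    have "(\<integral>\<^sup>+x. ennreal (h2 x ^ 2) \<partial>lborel)
        \<le> (\<integral>\<^sup>+x. ennreal (3 powr (1 - 2*b)) * ennreal (jbr (x - \<sigma>) powr (-(2*\<beta>+1-2*b))) \<partial>lborel)"
    proof (rule nn_integral_mono)
      fix x
      have "h2 x ^ 2 \<le> 3 powr (1 - 2*b) * jbr (x - \<sigma>) powr (-(2*\<beta>+1-2*b))"
        unfolding h2_def by (rule h2A'_bound) (use b0 bb b2 in auto)
      thus "ennreal (h2 x ^ 2) \<le> ennreal (3 powr (1 - 2*b)) * ennreal (jbr (x - \<sigma>) powr (-(2*\<beta>+1-2*b)))"
        by (simp add: ennreal_mult[symmetric] ennreal_leI)
    qed
    also have "\<dots> = ennreal (3 powr (1 - 2*b)) * (\<integral>\<^sup>+x. ennreal (jbr (x - \<sigma>) powr (-(2*\<beta>+1-2*b))) \<partial>lborel)"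
      by (rule nn_integral_cmult) measurable
    also have "\<dots> = ennreal (3 powr (1 - 2*b)) * ennreal Kr"
      using shift_int[of "\<lambda>u. ennreal (jbr u powr (-(2*\<beta>+1-2*b)))" \<sigma>] Kr by simp
    also have "\<dots> = ennreal (3 powr (1 - 2*b) * Kr)" using Kr0 by (simp add: ennreal_mult)
    finally show ?thesis .
  qed
  finally show "(\<integral>\<^sup>+\<tau>. ennreal (g (\<tau> - \<sigma>) * jbr (\<sigma> - a) powr (b - 1/2) * (if \<bar>\<tau> - a\<bar> < 2 * \<bar>\<sigma> - a\<bar> then 1 else 0)) \<partial>lborel)^2
     \<le> ennreal (Ar * (3 powr (1 - 2*b) * Kr))"
    using Ar0 Kr0 by (simp add: ennreal_mult mult_left_mono)
qed

lemma hs_B: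
  fixes g :: "real \<Rightarrow> real" and a b \<beta> Ar Kr :: real
  assumes gm[measurable]: "g \<in> borel_measurable borel" and g0: "\<And>u. 0 \<le> g u"
    and b0: "0 \<le> b" and bb: "b < \<beta>" and b2: "\<beta> < 1/2"
    and Ar: "(\<integral>\<^sup>+u. ennreal (jbr u powr (2*\<beta>) * (g u)^2) \<partial>lborel) = ennreal Ar"
    and Kr: "(\<integral>\<^sup>+x. ennreal (jbr x powr (-(2*\<beta>+1-2*b))) \<partial>lborel) = ennreal Kr"
    and Ar0: "0 \<le> Ar" and Kr0: "0 \<le> Kr"
  shows "(\<integral>\<^sup>+\<tau>. \<integral>\<^sup>+\<sigma>. ennreal (g (\<tau> - \<sigma>) * jbr (\<tau> - \<sigma>) powr b * jbr (\<sigma> - a) powr (-1/2) * (if \<bar>\<sigma> - a\<bar> \<le> \<bar>\<tau> - \<sigma>\<bar> then 1 else 0))^2 \<partial>lborel \<partial>lborel)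
     \<le> ennreal (Ar * Kr)"
proof -
  define H where "H = (\<lambda>z::real\<times>real. ennreal ((g (fst z) * jbr (fst z) powr b * jbr (snd z) powr (-1/2) * (if \<bar>snd z\<bar> \<le> \<bar>fst z\<bar> then 1 else 0))^2))"
  have Hm[measurable]: "H \<in> borel_measurable (lborel \<Otimes>\<^sub>M lborel)" unfolding H_def by measurable
  have "(\<integral>\<^sup>+\<tau>. \<integral>\<^sup>+\<sigma>. ennreal (g (\<tau> - \<sigma>) * jbr (\<tau> - \<sigma>) powr b * jbr (\<sigma> - a) powr (-1/2) * (if \<bar>\<sigma> - a\<bar> \<le> \<bar>\<tau> - \<sigma>\<bar> then 1 else 0))^2 \<partial>lborel \<partial>lborel)
      = (\<integral>\<^sup>+\<tau>. \<integral>\<^sup>+\<sigma>. H (\<tau> - \<sigma>, \<sigma> - a) \<partial>lborel \<partial>lborel)"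
    unfolding H_def using g0 by (intro nn_integral_cong) (simp add: ennreal_power)
  also have "\<dots> = (\<integral>\<^sup>+u. \<integral>\<^sup>+v. H (u, v) \<partial>lborel \<partial>lborel)"
    by (rule double_shift) (rule Hm)
  also have "\<dots> \<le> (\<integral>\<^sup>+u. \<integral>\<^sup>+v. ennreal (jbr u powr (2*\<beta>) * (g u)^2) * ennreal (jbr v powr (-(2*\<beta>+1-2*b))) \<partial>lborel \<partial>lborel)"
  proof (intro nn_integral_mono)
    fix u v :: real
    have "(g u * jbr u powr b * jbr v powr (-1/2) * (if \<bar>v\<bar> \<le> \<bar>u\<bar> then 1 else 0))^2
       \<le> (jbr u powr (2*\<beta>) * (g u)^2) * jbr v powr (-(2*\<beta>+1-2*b))"
      by (rule hB_bound) (use b0 bb g0 in auto)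
    thus "H (u, v) \<le> ennreal (jbr u powr (2*\<beta>) * (g u)^2) * ennreal (jbr v powr (-(2*\<beta>+1-2*b)))"
      unfolding H_def by (simp add: ennreal_mult[symmetric] ennreal_leI)
  qed
  also have "\<dots> = (\<integral>\<^sup>+u. ennreal (jbr u powr (2*\<beta>) * (g u)^2) * ennreal Kr \<partial>lborel)"
  proof (intro nn_integral_cong)
    fix u
    have m: "(\<lambda>v. ennreal (jbr v powr (-(2*\<beta>+1-2*b)))) \<in> borel_measurable lborel" by measurable
    show "(\<integral>\<^sup>+v. ennreal (jbr u powr (2*\<beta>) * (g u)^2) * ennreal (jbr v powr (-(2*\<beta>+1-2*b))) \<partial>lborel)
        = ennreal (jbr u powr (2*\<beta>) * (g u)^2) * ennreal Kr"
      using nn_integral_cmult[OF m, of "ennreal (jbr u powr (2*\<beta>) * (g u)^2)"] Kr by simp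
  qed
  also have "\<dots> = ennreal Ar * ennreal Kr"
    by (simp add: nn_integral_multc Ar)
  also have "\<dots> = ennreal (Ar * Kr)" using Ar0 Kr0 by (simp add: ennreal_mult)
  finally show ?thesis .
qed



lemma key:
  fixes g :: "real \<Rightarrow> real" and b \<beta> :: real
  assumes gm[measurable]: "g \<in> borel_measurable borel" and g0: "\<And>u. 0 \<le> g u"
    and b0: "0 \<le> b" and bb: "b < \<beta>" and b2: "\<beta> < 1/2"
    and Afin: "(\<integral>\<^sup>+u. ennreal (jbr u powr (2*\<beta>) * (g u)^2) \<partial>lborel) < \<infinity>"
  shows "\<exists>C\<ge>0. \<forall>a f. f \<in> borel_measurable borel \<longrightarrow> (\<forall>x. 0 \<le> f x) \<longrightarrow>
     (\<integral>\<^sup>+\<tau>. ennreal (jbr (\<tau> - a) powr (2*b)) * (\<integral>\<^sup>+\<sigma>. ennreal (g (\<tau> - \<sigma>) * f \<sigma>) \<partial>lborel)^2 \<partial>lborel)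
       \<le> ennreal C * (\<integral>\<^sup>+\<sigma>. ennreal (jbr (\<sigma> - a) * (f \<sigma>)^2) \<partial>lborel)"
proof -
  obtain Ar where Ar: "(\<integral>\<^sup>+u. ennreal (jbr u powr (2*\<beta>) * (g u)^2) \<partial>lborel) = ennreal Ar" and Ar0: "0 \<le> Ar"
    using Afin by (cases "(\<integral>\<^sup>+u. ennreal (jbr u powr (2*\<beta>) * (g u)^2) \<partial>lborel)" rule: ennreal_cases) auto
  have "(\<integral>\<^sup>+x. ennreal (jbr x powr (-(2*\<beta>+1-2*b))) \<partial>lborel) < \<infinity>" by (rule Kfin) (use bb in simp)
  then obtain Kr where Kr: "(\<integral>\<^sup>+x. ennreal (jbr x powr (-(2*\<beta>+1-2*b))) \<partial>lborel) = ennreal Kr" and Kr0: "0 \<le> Kr"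
    by (cases "(\<integral>\<^sup>+x. ennreal (jbr x powr (-(2*\<beta>+1-2*b))) \<partial>lborel)" rule: ennreal_cases) auto
  define c1 where "c1 = sqrt (Ar * (2 * Kr))"
  define c2 where "c2 = sqrt (Ar * (3 powr (1 - 2*b) * Kr))"
  define c0 where "c0 = 2 * (2 powr b)^2"
  define C where "C = c0 * (c1 * c2 + Ar * Kr)"
  have c10: "0 \<le> c1" and c20: "0 \<le> c2" and c00: "0 \<le> c0" unfolding c1_def c2_def c0_def using Ar0 Kr0 by auto
  have C0: "0 \<le> C" unfolding C_def using c10 c20 c00 Ar0 Kr0 by simp
  show ?thesis
  proof (intro exI[of _ C] conjI allI impI C0)
    fix a :: real and f :: "real \<Rightarrow> real" assume fm[measurable]: "f \<in> borel_measurable borel" and f0: "\<forall>x. 0 \<le> (f x::real)"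
    define kA :: "real \<times> real \<Rightarrow> real" where "kA = (\<lambda>z. g (fst z - snd z) * jbr (snd z - a) powr (b - 1/2) * (if \<bar>fst z - a\<bar> < 2 * \<bar>snd z - a\<bar> then 1 else 0))"
    define kB :: "real \<times> real \<Rightarrow> real" where "kB = (\<lambda>z. g (fst z - snd z) * jbr (fst z - snd z) powr b * jbr (snd z - a) powr (-1/2) * (if \<bar>snd z - a\<bar> \<le> \<bar>fst z - snd z\<bar> then 1 else 0))"
    define G where "G = (\<lambda>\<sigma>. ennreal (sqrt (jbr (\<sigma> - a)) * f \<sigma>))"
    have kAm[measurable]: "kA \<in> borel_measurable (lborel \<Otimes>\<^sub>M lborel)" unfolding kA_def by measurable
    have kBm[measurable]: "kB \<in> borel_measurable (lborel \<Otimes>\<^sub>M lborel)" unfolding kB_def by measurable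
    have Gm[measurable]: "G \<in> borel_measurable lborel" unfolding G_def by measurable
    have kA0: "\<And>z. 0 \<le> kA z" unfolding kA_def using g0 by auto
    have kB0: "\<And>z. 0 \<le> kB z" unfolding kB_def using g0 by auto
    define I where "I = (\<integral>\<^sup>+\<sigma>. G \<sigma> ^ 2 \<partial>lborel)"
    have I: "I = (\<integral>\<^sup>+\<sigma>. ennreal (jbr (\<sigma> - a) * (f \<sigma>)^2) \<partial>lborel)"
      unfolding I_def G_def using f0 jbr_pos
      by (intro nn_integral_cong) (simp add: ennreal_power power_mult_distrib less_imp_le)
    have XA: "(\<integral>\<^sup>+\<tau>. (\<integral>\<^sup>+\<sigma>. ennreal (kA (\<tau>,\<sigma>)) * G \<sigma> \<partial>lborel)^2 \<partial>lborel) \<le> ennreal c1 * ennreal c2 * I"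
      unfolding I_def
    proof (rule schur[OF kAm kA0 Gm])
      fix \<tau> show "(\<integral>\<^sup>+\<sigma>. ennreal (kA (\<tau>,\<sigma>)) \<partial>lborel) \<le> ennreal c1"
        using schur_C1[OF gm g0 b0 bb b2 Ar Kr Ar0 Kr0, of \<tau> a] unfolding kA_def c1_def by simp
    next
      fix \<sigma> show "(\<integral>\<^sup>+\<tau>. ennreal (kA (\<tau>,\<sigma>)) \<partial>lborel) \<le> ennreal c2"
        using schur_C2[OF gm g0 b0 bb b2 Ar Kr Ar0 Kr0, where a=a and \<sigma>=\<sigma>] unfolding kA_def c2_def by simp
    qed
    have XB: "(\<integral>\<^sup>+\<tau>. (\<integral>\<^sup>+\<sigma>. ennreal (kB (\<tau>,\<sigma>)) * G \<sigma> \<partial>lborel)^2 \<partial>lborel) \<le> ennreal (Ar * Kr) * I"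
    proof -
      have "(\<integral>\<^sup>+\<tau>. \<integral>\<^sup>+\<sigma>. ennreal (kB (\<tau>,\<sigma>))^2 \<partial>lborel \<partial>lborel) \<le> ennreal (Ar * Kr)"
        using hs_B[OF gm g0 b0 bb b2 Ar Kr Ar0 Kr0, of a] unfolding kB_def by simp
      hence "(\<integral>\<^sup>+\<tau>. \<integral>\<^sup>+\<sigma>. ennreal (kB (\<tau>,\<sigma>))^2 \<partial>lborel \<partial>lborel) * I \<le> ennreal (Ar * Kr) * I"
        by (rule mult_right_mono) simp
      with hilbert_schmidt[OF kBm Gm] show ?thesis unfolding I_def by (rule order_trans)
    qed
    show "(\<integral>\<^sup>+\<tau>. ennreal (jbr (\<tau> - a) powr (2*b)) * (\<integral>\<^sup>+\<sigma>. ennreal (g (\<tau> - \<sigma>) * f \<sigma>) \<partial>lborel)^2 \<partial>lborel)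
       \<le> ennreal C * (\<integral>\<^sup>+\<sigma>. ennreal (jbr (\<sigma> - a) * (f \<sigma>)^2) \<partial>lborel)"
    proof -
      define X where "X = (\<lambda>\<tau>. \<integral>\<^sup>+\<sigma>. ennreal (kA (\<tau>,\<sigma>)) * G \<sigma> \<partial>lborel)"
      define Y where "Y = (\<lambda>\<tau>. \<integral>\<^sup>+\<sigma>. ennreal (kB (\<tau>,\<sigma>)) * G \<sigma> \<partial>lborel)"
      have Xm[measurable]: "X \<in> borel_measurable lborel" unfolding X_def by measurable
      have Ym[measurable]: "Y \<in> borel_measurable lborel" unfolding Y_def by measurable
      have pt: "ennreal (jbr (\<tau> - a) powr (2*b)) * (\<integral>\<^sup>+\<sigma>. ennreal (g (\<tau> - \<sigma>) * f \<sigma>) \<partial>lborel)^2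
          \<le> ennreal c0 * (X \<tau> ^ 2 + Y \<tau> ^ 2)" for \<tau>
      proof -
        define T where "T = (\<integral>\<^sup>+\<sigma>. ennreal (g (\<tau> - \<sigma>) * f \<sigma>) \<partial>lborel)"
        have "ennreal (jbr (\<tau> - a) powr b) * T = (\<integral>\<^sup>+\<sigma>. ennreal (jbr (\<tau> - a) powr b) * ennreal (g (\<tau> - \<sigma>) * f \<sigma>) \<partial>lborel)"
          unfolding T_def by (rule nn_integral_cmult[symmetric]) measurable
        also have "\<dots> \<le> (\<integral>\<^sup>+\<sigma>. ennreal (2 powr b) * (ennreal (kA (\<tau>,\<sigma>)) * G \<sigma> + ennreal (kB (\<tau>,\<sigma>)) * G \<sigma>) \<partial>lborel)"
        proof (rule nn_integral_mono)
          fix \<sigma>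
          have R: "jbr (\<tau> - a) powr b * (g (\<tau> - \<sigma>) * f \<sigma>) \<le> 2 powr b *
             (kA (\<tau>,\<sigma>) * (sqrt (jbr (\<sigma> - a)) * f \<sigma>) + kB (\<tau>,\<sigma>) * (sqrt (jbr (\<sigma> - a)) * f \<sigma>))"
            using region_bound[OF b0 g0[of "\<tau> - \<sigma>"] f0[rule_format, of \<sigma>], of "\<tau> - a" "\<sigma> - a"]
            unfolding kA_def kB_def by simp
          have n1: "0 \<le> kA (\<tau>,\<sigma>) * (sqrt (jbr (\<sigma> - a)) * f \<sigma>)" using kA0 f0 jbr_pos[of "\<sigma> - a"] by simp
          have n2: "0 \<le> kB (\<tau>,\<sigma>) * (sqrt (jbr (\<sigma> - a)) * f \<sigma>)" using kB0 f0 jbr_pos[of "\<sigma> - a"] by simp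
          have n3: "0 \<le> sqrt (jbr (\<sigma> - a)) * f \<sigma>" using f0 jbr_pos[of "\<sigma> - a"] by simp
          have "ennreal (jbr (\<tau> - a) powr b) * ennreal (g (\<tau> - \<sigma>) * f \<sigma>) = ennreal (jbr (\<tau> - a) powr b * (g (\<tau> - \<sigma>) * f \<sigma>))"
            by (simp add: ennreal_mult')
          also have "\<dots> \<le> ennreal (2 powr b * (kA (\<tau>,\<sigma>) * (sqrt (jbr (\<sigma> - a)) * f \<sigma>) + kB (\<tau>,\<sigma>) * (sqrt (jbr (\<sigma> - a)) * f \<sigma>)))"
            by (rule ennreal_leI[OF R])
          also have "\<dots> = ennreal (2 powr b) * (ennreal (kA (\<tau>,\<sigma>)) * G \<sigma> + ennreal (kB (\<tau>,\<sigma>)) * G \<sigma>)"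
          proof -
            have "ennreal (2 powr b * (kA (\<tau>,\<sigma>) * (sqrt (jbr (\<sigma> - a)) * f \<sigma>) + kB (\<tau>,\<sigma>) * (sqrt (jbr (\<sigma> - a)) * f \<sigma>)))
               = ennreal (2 powr b) * ennreal (kA (\<tau>,\<sigma>) * (sqrt (jbr (\<sigma> - a)) * f \<sigma>) + kB (\<tau>,\<sigma>) * (sqrt (jbr (\<sigma> - a)) * f \<sigma>))"
              by (rule ennreal_mult') simp
            also have "ennreal (kA (\<tau>,\<sigma>) * (sqrt (jbr (\<sigma> - a)) * f \<sigma>) + kB (\<tau>,\<sigma>) * (sqrt (jbr (\<sigma> - a)) * f \<sigma>))
               = ennreal (kA (\<tau>,\<sigma>) * (sqrt (jbr (\<sigma> - a)) * f \<sigma>)) + ennreal (kB (\<tau>,\<sigma>) * (sqrt (jbr (\<sigma> - a)) * f \<sigma>))"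
              by (rule ennreal_plus[OF n1 n2])
            also have "ennreal (kA (\<tau>,\<sigma>) * (sqrt (jbr (\<sigma> - a)) * f \<sigma>)) = ennreal (kA (\<tau>,\<sigma>)) * G \<sigma>"
              unfolding G_def by (rule ennreal_mult'[OF kA0])
            also have "ennreal (kB (\<tau>,\<sigma>) * (sqrt (jbr (\<sigma> - a)) * f \<sigma>)) = ennreal (kB (\<tau>,\<sigma>)) * G \<sigma>"
              unfolding G_def by (rule ennreal_mult'[OF kB0])
            finally show ?thesis .
          qed
          finally show "ennreal (jbr (\<tau> - a) powr b) * ennreal (g (\<tau> - \<sigma>) * f \<sigma>)
             \<le> ennreal (2 powr b) * (ennreal (kA (\<tau>,\<sigma>)) * G \<sigma> + ennreal (kB (\<tau>,\<sigma>)) * G \<sigma>)" .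
        qed
        also have "\<dots> = ennreal (2 powr b) * (X \<tau> + Y \<tau>)"
          unfolding X_def Y_def by (simp add: nn_integral_cmult nn_integral_add)
        finally have L: "ennreal (jbr (\<tau> - a) powr b) * T \<le> ennreal (2 powr b) * (X \<tau> + Y \<tau>)" .
        have "ennreal (jbr (\<tau> - a) powr (2*b)) * T^2 = (ennreal (jbr (\<tau> - a) powr b) * T)^2"
          using jbr_pos[of "\<tau> - a"] by (simp add: power_mult_distrib ennreal_power powr_sq)
        also have "\<dots> \<le> (ennreal (2 powr b) * (X \<tau> + Y \<tau>))^2"
          by (rule power_mono[OF L]) simp
        also have "\<dots> = ennreal (2 powr b)^2 * (X \<tau> + Y \<tau>)^2" by (simp add: power_mult_distrib)
        also have "\<dots> \<le> ennreal (2 powr b)^2 * (2 * (X \<tau> ^ 2 + Y \<tau> ^ 2))"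
          by (rule mult_left_mono[OF sum_sq_ennreal]) simp
        also have "\<dots> = ennreal c0 * (X \<tau> ^ 2 + Y \<tau> ^ 2)"
          unfolding c0_def by (simp add: ennreal_mult' ennreal_power mult_ac distrib_left)
        finally show ?thesis unfolding T_def .
      qed
      have "(\<integral>\<^sup>+\<tau>. ennreal (jbr (\<tau> - a) powr (2*b)) * (\<integral>\<^sup>+\<sigma>. ennreal (g (\<tau> - \<sigma>) * f \<sigma>) \<partial>lborel)^2 \<partial>lborel)
          \<le> (\<integral>\<^sup>+\<tau>. ennreal c0 * (X \<tau> ^ 2 + Y \<tau> ^ 2) \<partial>lborel)"
        by (rule nn_integral_mono) (rule pt)
      also have "\<dots> = ennreal c0 * ((\<integral>\<^sup>+\<tau>. X \<tau> ^ 2 \<partial>lborel) + (\<integral>\<^sup>+\<tau>. Y \<tau> ^ 2 \<partial>lborel))"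
        by (simp add: nn_integral_cmult nn_integral_add)
      also have "\<dots> \<le> ennreal c0 * (ennreal c1 * ennreal c2 * I + ennreal (Ar * Kr) * I)"
        using XA XB unfolding X_def Y_def by (intro mult_left_mono add_mono) auto
      also have "\<dots> = ennreal C * I"
      proof -
        have p1: "0 \<le> c1 * c2" "0 \<le> Ar * Kr" using c10 c20 Ar0 Kr0 by auto
        have "ennreal C = ennreal c0 * (ennreal c1 * ennreal c2 + ennreal Ar * ennreal Kr)"
          unfolding C_def using c00 c10 c20 Ar0 Kr0 p1 by (simp add: ennreal_mult ennreal_plus)
        thus ?thesis using Ar0 Kr0 by (simp add: ennreal_mult distrib_right mult.assoc)
      qed
      finally show ?thesis unfolding I .
    qed
  qed
qed



lemma norm_integral_le_nn:
  fixes h :: "real \<Rightarrow> complex"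
  shows "ennreal (cmod (integral\<^sup>L lborel h)) \<le> (\<integral>\<^sup>+x. ennreal (cmod (h x)) \<partial>lborel)"
proof (cases "integrable lborel h")
  case True
  then show ?thesis using integral_norm_bound_ennreal[OF True] by simp
next
  case False
  then show ?thesis by (simp add: not_integrable_integral_eq)
qed

theorem lemma2p2:
  fixes s b :: real and \<phi>h :: "real \<Rightarrow> complex"
  assumes "0 \<le> b" and "b < 1/2"
    and "\<forall>\<beta><1/2. in_Hbeta \<beta> \<phi>h"
  shows "\<exists>C::real. \<forall>F. in_Xsb s (1/2) F \<longrightarrow>
           Xsb_sq s b (time_mult \<phi>h F) \<le> ennreal (C\<^sup>2) * Xsb_sq s (1/2) F"
proof -
  define \<beta> where "\<beta> = b/2 + 1/4"
  have bb: "b < \<beta>" and b2: "\<beta> < 1/2" unfolding \<beta>_def using assms(2) by auto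
  have H: "in_Hbeta \<beta> \<phi>h" using assms(3) b2 by auto
  have phm: "\<phi>h \<in> borel_measurable borel" using H unfolding in_Hbeta_def by simp
  define g where "g = (\<lambda>u. cmod (\<phi>h u))"
  have gm[measurable]: "g \<in> borel_measurable borel" unfolding g_def using phm by measurable
  have g0: "\<And>u. 0 \<le> g u" unfolding g_def by simp
  have Afin: "(\<integral>\<^sup>+u. ennreal (jbr u powr (2*\<beta>) * (g u)^2) \<partial>lborel) < \<infinity>"
    using H unfolding in_Hbeta_def g_def by simp
  obtain C where C0: "0 \<le> C" and CC: "\<And>a f. f \<in> borel_measurable borel \<Longrightarrow> (\<forall>x. 0 \<le> f x) \<Longrightarrow>
     (\<integral>\<^sup>+\<tau>. ennreal (jbr (\<tau> - a) powr (2*b)) * (\<integral>\<^sup>+\<sigma>. ennreal (g (\<tau> - \<sigma>) * f \<sigma>) \<partial>lborel)^2 \<partial>lborel)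
       \<le> ennreal C * (\<integral>\<^sup>+\<sigma>. ennreal (jbr (\<sigma> - a) * (f \<sigma>)^2) \<partial>lborel)"
    using key[OF gm g0 assms(1) bb b2 Afin] by blast
  define p where "p = 1 / (2 * pi)"
  have p0: "0 \<le> p" unfolding p_def by simp
  define C' where "C' = p * sqrt C"
  have C'2: "C'^2 = p^2 * C" unfolding C'_def using C0 by (simp add: power_mult_distrib)
  show ?thesis
  proof (intro exI[of _ C'] allI impI)
    fix F assume F: "in_Xsb s (1/2) F"
    have Fm: "\<And>\<xi>. F \<xi> \<in> borel_measurable borel" using F unfolding in_Xsb_def by simp
    have inner: "(\<integral>\<^sup>+\<tau>. ennreal (p * jbr (real_of_int \<xi>) powr (2 * s)
                 * jbr (\<tau> - (real_of_int \<xi>)^3) powr (2 * b) * (cmod (time_mult \<phi>h F \<xi> \<tau>))\<^sup>2) \<partial>lborel)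
       \<le> ennreal (C'^2) * (\<integral>\<^sup>+\<tau>. ennreal (p * jbr (real_of_int \<xi>) powr (2 * s)
                 * jbr (\<tau> - (real_of_int \<xi>)^3) powr (2 * (1/2)) * (cmod (F \<xi> \<tau>))\<^sup>2) \<partial>lborel)" for \<xi>
    proof -
      define a where "a = (real_of_int \<xi>)^3"
      define w where "w = p * jbr (real_of_int \<xi>) powr (2 * s)"
      have w0: "0 \<le> w" unfolding w_def using p0 by simp
      define f where "f = (\<lambda>\<sigma>. cmod (F \<xi> \<sigma>))"
      have fm[measurable]: "f \<in> borel_measurable borel" unfolding f_def using Fm[of \<xi>] by measurable
      have f0: "\<forall>x. 0 \<le> f x" unfolding f_def by simp
      define T where "T = (\<lambda>\<tau>. \<integral>\<^sup>+\<sigma>. ennreal (g (\<tau> - \<sigma>) * f \<sigma>) \<partial>lborel)"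
      have Tm[measurable]: "T \<in> borel_measurable lborel" unfolding T_def by measurable
      have pt: "ennreal (w * jbr (\<tau> - a) powr (2 * b) * (cmod (time_mult \<phi>h F \<xi> \<tau>))\<^sup>2)
          \<le> ennreal (w * p^2) * (ennreal (jbr (\<tau> - a) powr (2*b)) * T \<tau> ^ 2)" for \<tau>
      proof -
        have "ennreal (cmod (integral\<^sup>L lborel (\<lambda>\<sigma>. \<phi>h (\<tau> - \<sigma>) * F \<xi> \<sigma>))) \<le> T \<tau>"
          using norm_integral_le_nn[of "\<lambda>\<sigma>. \<phi>h (\<tau> - \<sigma>) * F \<xi> \<sigma>"]
          unfolding T_def g_def f_def by (simp add: norm_mult)
        hence "ennreal (cmod (integral\<^sup>L lborel (\<lambda>\<sigma>. \<phi>h (\<tau> - \<sigma>) * F \<xi> \<sigma>)))^2 \<le> T \<tau> ^ 2"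
          by (rule power_mono) simp
        moreover have "cmod (time_mult \<phi>h F \<xi> \<tau>) = p * cmod (integral\<^sup>L lborel (\<lambda>\<sigma>. \<phi>h (\<tau> - \<sigma>) * F \<xi> \<sigma>))"
          unfolding time_mult_def p_def by (simp add: norm_mult norm_divide)
        ultimately show ?thesis
        proof -
          define Q where "Q = cmod (integral\<^sup>L lborel (\<lambda>\<sigma>. \<phi>h (\<tau> - \<sigma>) * F \<xi> \<sigma>))"
          assume h: "ennreal Q ^ 2 \<le> T \<tau> ^ 2" and cm: "cmod (time_mult \<phi>h F \<xi> \<tau>) = p * Q"
          have r: "w * jbr (\<tau> - a) powr (2 * b) * (cmod (time_mult \<phi>h F \<xi> \<tau>))\<^sup>2 = (w * p^2) * (jbr (\<tau> - a) powr (2*b) * Q^2)"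
            unfolding cm by (simp add: power_mult_distrib mult_ac)
          have "ennreal ((w * p^2) * (jbr (\<tau> - a) powr (2*b) * Q^2)) = ennreal (w * p^2) * (ennreal (jbr (\<tau> - a) powr (2*b)) * ennreal Q ^ 2)"
            using w0 by (simp add: ennreal_mult ennreal_power Q_def)
          also have "\<dots> \<le> ennreal (w * p^2) * (ennreal (jbr (\<tau> - a) powr (2*b)) * T \<tau> ^ 2)"
            by (intro mult_left_mono h) simp_all
          finally show ?thesis unfolding r .
        qed
      qed
      have "(\<integral>\<^sup>+\<tau>. ennreal (w * jbr (\<tau> - a) powr (2 * b) * (cmod (time_mult \<phi>h F \<xi> \<tau>))\<^sup>2) \<partial>lborel)
          \<le> (\<integral>\<^sup>+\<tau>. ennreal (w * p^2) * (ennreal (jbr (\<tau> - a) powr (2*b)) * T \<tau> ^ 2) \<partial>lborel)"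
        by (rule nn_integral_mono) (rule pt)
      also have "\<dots> = ennreal (w * p^2) * (\<integral>\<^sup>+\<tau>. ennreal (jbr (\<tau> - a) powr (2*b)) * T \<tau> ^ 2 \<partial>lborel)"
        by (rule nn_integral_cmult) measurable
      also have "\<dots> \<le> ennreal (w * p^2) * (ennreal C * (\<integral>\<^sup>+\<sigma>. ennreal (jbr (\<sigma> - a) * (f \<sigma>)^2) \<partial>lborel))"
        using CC[OF fm f0, of a] unfolding T_def by (rule mult_left_mono) simp
      also have "\<dots> = ennreal (C'^2) * (ennreal w * (\<integral>\<^sup>+\<sigma>. ennreal (jbr (\<sigma> - a) * (f \<sigma>)^2) \<partial>lborel))"
        unfolding C'2 using w0 p0 C0 by (simp add: ennreal_mult' ennreal_mult mult_ac)
      also have "ennreal w * (\<integral>\<^sup>+\<sigma>. ennreal (jbr (\<sigma> - a) * (f \<sigma>)^2) \<partial>lborel)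
          = (\<integral>\<^sup>+\<sigma>. ennreal (w * jbr (\<sigma> - a) powr (2 * (1/2)) * (cmod (F \<xi> \<sigma>))\<^sup>2) \<partial>lborel)"
      proof -
        have "ennreal w * (\<integral>\<^sup>+\<sigma>. ennreal (jbr (\<sigma> - a) * (f \<sigma>)^2) \<partial>lborel)
            = (\<integral>\<^sup>+\<sigma>. ennreal w * ennreal (jbr (\<sigma> - a) * (f \<sigma>)^2) \<partial>lborel)"
          by (rule nn_integral_cmult[symmetric]) measurable
        also have "\<dots> = (\<integral>\<^sup>+\<sigma>. ennreal (w * jbr (\<sigma> - a) powr (2 * (1/2)) * (cmod (F \<xi> \<sigma>))\<^sup>2) \<partial>lborel)"
        proof (intro nn_integral_cong)
          fix \<sigma>
          have "w * jbr (\<sigma> - a) powr (2 * (1/2)) * (cmod (F \<xi> \<sigma>))\<^sup>2 = w * (jbr (\<sigma> - a) * (f \<sigma>)^2)"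
            using jbr_pos[of "\<sigma> - a"] unfolding f_def by (simp add: powr_one mult.assoc)
          thus "ennreal w * ennreal (jbr (\<sigma> - a) * (f \<sigma>)^2) = ennreal (w * jbr (\<sigma> - a) powr (2 * (1/2)) * (cmod (F \<xi> \<sigma>))\<^sup>2)"
            by (simp only: ennreal_mult'[OF w0])
        qed
        finally show ?thesis .
      qed
      finally show ?thesis unfolding w_def a_def .
    qed
    show "Xsb_sq s b (time_mult \<phi>h F) \<le> ennreal (C'\<^sup>2) * Xsb_sq s (1/2) F"
      unfolding Xsb_sq_def p_def[symmetric]
      apply (subst nn_integral_cmult[symmetric])
       apply simp
      apply (rule nn_integral_mono)
      apply (rule inner)
      done
  qed
qed

end
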